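(* Let $\mathcal{A}$ and $\mathcal{B}$ be unital algebras over a field of characteristic zero, let $\mathcal{M}$ be an $(\mathcal{A},\mathcal{B})$-bimodule which is faithful as a left $\mathcal{A}$-module and as a right $\mathcal{B}$-module, and let $\mathcal{T}=Tri(\mathcal{A},\mathcal{M},\mathcal{B})$ be the associated (unital) triangular algebra, with identity $\mathbf{1}$ and center $Z(\mathcal{T})$. Let $n>1$ be an integer and let $\Psi:\mathcal{T}\to\mathcal{T}$ be a linear mapping satisfying \[ 2\Psi(X^n)=X^{n-1}\Psi(X)+\Psi(X)X^{n-1}\quad\text{for all } X\in\mathcal{T}. \] If $\Psi(\mathbf{1})\in Z(\mathcal{T})$, then $\Psi$ is a two-sided centralizer.
   Context: The triangular algebra $Tri(\mathcal{A},\mathcal{M},\mathcal{B})$ is the set of matrices $\begin{bmatrix} a & m\\ 0 & b\end{bmatrix}$ with $a\in\mathcal{A}$, $m\in\mathcal{M}$, $b\in\mathcal{B}$, under the usual matrix operations. Its center is $Z(\mathcal{T})=\{a\oplus b: a\in Z(\mathcal{A}),\ b\in Z(\mathcal{B}),\ am=mb \text{ for all } m\in\mathcal{M}\}$. An additive map $T:\mathcal{T}\to\mathcal{T}$ is a two-sided centralizer if $T(XY)=T(X)Y=XT(Y)$ for all $X,Y\in\mathcal{T}$. *)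

theory Defs
  imports Main
begin

definition unital_algebra_over :: "('k::field \<Rightarrow> 'a::ring_1 \<Rightarrow> 'a) \<Rightarrow> bool" where
  "unital_algebra_over s \<longleftrightarrow>
     (\<forall>c x y. s c (x + y) = s c x + s c y) \<and>
     (\<forall>c d x. s (c + d) x = s c x + s d x) \<and>
     (\<forall>c d x. s (c * d) x = s c (s d x)) \<and>
     (\<forall>x. s 1 x = x) \<and>
     (\<forall>c x y. s c (x * y) = s c x * y) \<and>
     (\<forall>c x y. s c (x * y) = x * s c y)"

definition vector_space_over :: "('k::field \<Rightarrow> 'm::ab_group_add \<Rightarrow> 'm) \<Rightarrow> bool" where
  "vector_space_over s \<longleftrightarrow>
     (\<forall>c x y. s c (x + y) = s c x + s c y) \<and>
     (\<forall>c d x. s (c + d) x = s c x + s d x) \<and>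
     (\<forall>c d x. s (c * d) x = s c (s d x)) \<and>
     (\<forall>x. s 1 x = x)"

definition bimodule :: "('k::field \<Rightarrow> 'a::ring_1 \<Rightarrow> 'a) \<Rightarrow> ('k \<Rightarrow> 'm::ab_group_add \<Rightarrow> 'm) \<Rightarrow>
    ('k \<Rightarrow> 'b::ring_1 \<Rightarrow> 'b) \<Rightarrow> ('a \<Rightarrow> 'm \<Rightarrow> 'm) \<Rightarrow> ('m \<Rightarrow> 'b \<Rightarrow> 'm) \<Rightarrow> bool" where
  "bimodule sA sM sB lA rB \<longleftrightarrow>
     vector_space_over sM \<and>
     (\<forall>a m m'. lA a (m + m') = lA a m + lA a m') \<and>
     (\<forall>a a' m. lA (a + a') m = lA a m + lA a' m) \<and>
     (\<forall>a a' m. lA (a * a') m = lA a (lA a' m)) \<and>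
     (\<forall>m. lA 1 m = m) \<and>
     (\<forall>b m m'. rB (m + m') b = rB m b + rB m' b) \<and>
     (\<forall>b b' m. rB m (b + b') = rB m b + rB m b') \<and>
     (\<forall>b b' m. rB m (b * b') = rB (rB m b) b') \<and>
     (\<forall>m. rB m 1 = m) \<and>
     (\<forall>a m b. rB (lA a m) b = lA a (rB m b)) \<and>
     (\<forall>c a m. lA (sA c a) m = sM c (lA a m)) \<and>
     (\<forall>c a m. lA a (sM c m) = sM c (lA a m)) \<and>
     (\<forall>c b m. rB (sM c m) b = sM c (rB m b)) \<and>
     (\<forall>c b m. rB m (sB c b) = sM c (rB m b))"

definition faithful_left :: "('a::ring_1 \<Rightarrow> 'm::ab_group_add \<Rightarrow> 'm) \<Rightarrow> bool" where
  "faithful_left lA \<longleftrightarrow> (\<forall>a. (\<forall>m. lA a m = 0) \<longrightarrow> a = 0)"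

definition faithful_right :: "('m::ab_group_add \<Rightarrow> 'b::ring_1 \<Rightarrow> 'm) \<Rightarrow> bool" where
  "faithful_right rB \<longleftrightarrow> (\<forall>b. (\<forall>m. rB m b = 0) \<longrightarrow> b = 0)"

text \<open>The triangular algebra Tri(A,M,B): elements [a m; 0 b] represented as triples (a,m,b).\<close>
type_synonym ('a, 'm, 'b) tri = "'a \<times> 'm \<times> 'b"

definition tri_add :: "('a::ring_1, 'm::ab_group_add, 'b::ring_1) tri \<Rightarrow> ('a, 'm, 'b) tri \<Rightarrow> ('a, 'm, 'b) tri" where
  "tri_add X Y = (case X of (a, m, b) \<Rightarrow> case Y of (a', m', b') \<Rightarrow> (a + a', m + m', b + b'))"

definition tri_smult :: "('k \<Rightarrow> 'a \<Rightarrow> 'a) \<Rightarrow> ('k \<Rightarrow> 'm \<Rightarrow> 'm) \<Rightarrow> ('k \<Rightarrow> 'b \<Rightarrow> 'b) \<Rightarrow>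
    'k \<Rightarrow> ('a, 'm, 'b) tri \<Rightarrow> ('a, 'm, 'b) tri" where
  "tri_smult sA sM sB c X = (case X of (a, m, b) \<Rightarrow> (sA c a, sM c m, sB c b))"

definition tri_mul :: "('a::ring_1 \<Rightarrow> 'm::ab_group_add \<Rightarrow> 'm) \<Rightarrow> ('m \<Rightarrow> 'b::ring_1 \<Rightarrow> 'm) \<Rightarrow>
    ('a, 'm, 'b) tri \<Rightarrow> ('a, 'm, 'b) tri \<Rightarrow> ('a, 'm, 'b) tri" where
  "tri_mul lA rB X Y = (case X of (a, m, b) \<Rightarrow> case Y of (a', m', b') \<Rightarrow>
      (a * a', lA a m' + rB m b', b * b'))"

definition tri_one :: "('a::ring_1, 'm::ab_group_add, 'b::ring_1) tri" where
  "tri_one = (1, 0, 1)"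

primrec tri_pow :: "('a::ring_1 \<Rightarrow> 'm::ab_group_add \<Rightarrow> 'm) \<Rightarrow> ('m \<Rightarrow> 'b::ring_1 \<Rightarrow> 'm) \<Rightarrow>
    ('a, 'm, 'b) tri \<Rightarrow> nat \<Rightarrow> ('a, 'm, 'b) tri" where
  "tri_pow lA rB X 0 = tri_one"
| "tri_pow lA rB X (Suc n) = tri_mul lA rB X (tri_pow lA rB X n)"

definition ring_center :: "'a::ring_1 set" where
  "ring_center = {z. \<forall>x. z * x = x * z}"

definition tri_center :: "('a::ring_1 \<Rightarrow> 'm::ab_group_add \<Rightarrow> 'm) \<Rightarrow> ('m \<Rightarrow> 'b::ring_1 \<Rightarrow> 'm) \<Rightarrow>
    ('a, 'm, 'b) tri set" where
  "tri_center lA rB = {(a, 0, b) | a b. a \<in> ring_center \<and> b \<in> ring_center \<and> (\<forall>m. lA a m = rB m b)}"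

definition tri_linear :: "('k \<Rightarrow> 'a \<Rightarrow> 'a) \<Rightarrow> ('k \<Rightarrow> 'm \<Rightarrow> 'm) \<Rightarrow> ('k \<Rightarrow> 'b \<Rightarrow> 'b) \<Rightarrow>
    (('a::ring_1, 'm::ab_group_add, 'b::ring_1) tri \<Rightarrow> ('a, 'm, 'b) tri) \<Rightarrow> bool" where
  "tri_linear sA sM sB \<Psi> \<longleftrightarrow>
     (\<forall>X Y. \<Psi> (tri_add X Y) = tri_add (\<Psi> X) (\<Psi> Y)) \<and>
     (\<forall>c X. \<Psi> (tri_smult sA sM sB c X) = tri_smult sA sM sB c (\<Psi> X))"

definition two_sided_centralizer :: "('a::ring_1 \<Rightarrow> 'm::ab_group_add \<Rightarrow> 'm) \<Rightarrow> ('m \<Rightarrow> 'b::ring_1 \<Rightarrow> 'm) \<Rightarrow>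
    (('a, 'm, 'b) tri \<Rightarrow> ('a, 'm, 'b) tri) \<Rightarrow> bool" where
  "two_sided_centralizer lA rB T \<longleftrightarrow>
     (\<forall>X Y. T (tri_add X Y) = tri_add (T X) (T Y)) \<and>
     (\<forall>X Y. T (tri_mul lA rB X Y) = tri_mul lA rB (T X) Y \<and>
            T (tri_mul lA rB X Y) = tri_mul lA rB X (T Y))"

end

theory Submission
  imports Defs "HOL-Library.Product_Plus"
begin


locale vsp =
  fixes s :: "'k::field \<Rightarrow> 'v::ab_group_add \<Rightarrow> 'v"
  assumes vs: "vector_space_over s"
begin

lemma s_add_r: "s c (x + y) = s c x + s c y" using vs unfolding vector_space_over_def by blast
lemma s_add_l: "s (c + d) x = s c x + s d x" using vs unfolding vector_space_over_def by blast
lemma s_mult: "s (c * d) x = s c (s d x)" using vs unfolding vector_space_over_def by blast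
lemma s_one: "s 1 x = x" using vs unfolding vector_space_over_def by blast

lemma s_zero_r: "s c 0 = 0"
proof -
  have "s c 0 = s c 0 + s c 0" using s_add_r[of c 0 0] by simp
  thus ?thesis by simp
qed

lemma s_zero_l: "s 0 x = 0"
proof -
  have "s 0 x = s 0 x + s 0 x" using s_add_l[of 0 0 x] by simp
  thus ?thesis by simp
qed

lemma s_neg_r: "s c (- x) = - s c x"
proof -
  have "s c (-x) + s c x = 0" using s_add_r[of c "-x" x] s_zero_r by simp
  thus ?thesis by (simp add: eq_neg_iff_add_eq_0)
qed

lemma s_neg_l: "s (- c) x = - s c x"
proof -
  have "s (-c) x + s c x = 0" using s_add_l[of "-c" c x] s_zero_l by simp
  thus ?thesis by (simp add: eq_neg_iff_add_eq_0)
qed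

lemma s_diff_r: "s c (x - y) = s c x - s c y"
  using s_add_r[of c x "-y"] s_neg_r by simp

lemma s_diff_l: "s (c - d) x = s c x - s d x"
  using s_add_l[of c "-d" x] s_neg_l by simp

lemma s_sum_r: "s c (sum f A) = (\<Sum>i\<in>A. s c (f i))"
  by (induct A rule: infinite_finite_induct) (simp_all add: s_zero_r s_add_r)

lemma s_sum_l: "s (sum g A) x = (\<Sum>i\<in>A. s (g i) x)"
  by (induct A rule: infinite_finite_induct) (simp_all add: s_zero_l s_add_l)

lemma s_comm: "s c (s d x) = s d (s c x)"
  by (metis s_mult mult.commute)

lemma s_cancel: assumes "c \<noteq> 0" "s c x = s c y" shows "x = y"
proof -
  have "s (inverse c) (s c x) = s (inverse c) (s c y)" using assms by simp
  thus ?thesis using assms(1) by (simp add: s_mult[symmetric] s_one)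
qed

lemma s_two: "s 2 x = x + x"
  by (metis one_add_one s_one s_add_l)

lemma grouping:
  assumes "finite I" "e ` I \<subseteq> {..D}"
  shows "(\<Sum>i\<in>I. s (a i * t ^ e i) (v i)) = (\<Sum>j\<le>D. s (t ^ j) (\<Sum>i\<in>{i\<in>I. e i = j}. s (a i) (v i)))"
proof -
  have "(\<Sum>j\<le>D. s (t ^ j) (\<Sum>i\<in>{i\<in>I. e i = j}. s (a i) (v i)))
      = (\<Sum>j\<le>D. \<Sum>i\<in>{i\<in>I. e i = j}. s (a i * t ^ e i) (v i))"
    apply (rule sum.cong[OF refl])
    apply (simp add: s_sum_r)
    apply (rule sum.cong[OF refl])
    by (auto simp add: s_mult s_comm)
  also have "\<dots> = (\<Sum>i\<in>I. s (a i * t ^ e i) (v i))"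
    by (rule sum.group[OF assms(1) finite_atMost assms(2)])
  finally show ?thesis by simp
qed

lemma poly_zero:
  fixes c :: "nat \<Rightarrow> 'v"
  assumes inf: "infinite (UNIV :: 'k set)"
    and "finite F" "\<forall>t. t \<notin> F \<longrightarrow> (\<Sum>k\<le>D. s (t ^ k) (c k)) = 0" "k \<le> D"
  shows "c k = 0"
  using assms(2-4)
proof (induction D arbitrary: c F k)
  case 0
  obtain t where "t \<notin> F" using ex_new_if_finite[OF inf 0(1)] by blast
  thus ?case using 0 by (auto simp add: s_one)
next
  case (Suc d)
  obtain a where a: "a \<notin> F" using ex_new_if_finite[OF inf Suc(2)] by blast
  define g where "g i = (\<Sum>k\<in>{Suc i..Suc d}. s (a ^ (k - Suc i)) (c k))" for i
  have key: "(\<Sum>k\<le>Suc d. s (t ^ k) (c k)) - (\<Sum>k\<le>Suc d. s (a ^ k) (c k))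
      = s (t - a) (\<Sum>i\<le>d. s (t ^ i) (g i))" for t
  proof -
    have "(\<Sum>k\<le>Suc d. s (t ^ k) (c k)) - (\<Sum>k\<le>Suc d. s (a ^ k) (c k))
        = (\<Sum>k\<le>Suc d. s (t ^ k - a ^ k) (c k))"
      by (simp add: sum_subtractf s_diff_l)
    also have "\<dots> = (\<Sum>k\<le>Suc d. s (t - a) (\<Sum>i<k. s (t ^ i) (s (a ^ (k - Suc i)) (c k))))"
      apply (rule sum.cong[OF refl])
      by (simp add: power_diff_sumr2 s_mult s_sum_l s_sum_r s_comm)
    also have "\<dots> = s (t - a) (\<Sum>k\<le>Suc d. \<Sum>i<k. s (t ^ i) (s (a ^ (k - Suc i)) (c k)))"
      by (rule s_sum_r[symmetric])
    also have "(\<Sum>k\<le>Suc d. \<Sum>i<k. s (t ^ i) (s (a ^ (k - Suc i)) (c k)))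
        = (\<Sum>i<Suc d. \<Sum>k\<in>{Suc i..Suc d}. s (t ^ i) (s (a ^ (k - Suc i)) (c k)))"
      by (rule sum.nested_swap')
    also have "\<dots> = (\<Sum>i\<le>d. s (t ^ i) (g i))"
      by (simp only: g_def s_sum_r lessThan_Suc_atMost)
    finally show ?thesis .
  qed
  have G0: "(\<Sum>i\<le>d. s (t ^ i) (g i)) = 0" if "t \<notin> insert a F" for t
  proof -
    have "s (t - a) (\<Sum>i\<le>d. s (t ^ i) (g i)) = s (t - a) 0"
      using key[of t] Suc(3) that a by (simp add: s_zero_r)
    moreover have "t - a \<noteq> 0" using that by simp
    ultimately show ?thesis using s_cancel by blast
  qed
  have "g d = 0" using Suc.IH[of "insert a F" g d] G0 Suc(2) by auto
  hence cS: "c (Suc d) = 0" by (simp add: g_def s_one)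
  show ?case
  proof (cases "k = Suc d")
    case True thus ?thesis using cS by simp
  next
    case False
    hence "k \<le> d" using Suc(4) by simp
    moreover have "\<forall>t. t \<notin> F \<longrightarrow> (\<Sum>k\<le>d. s (t ^ k) (c k)) = 0"
      using Suc(3) cS by (simp add: s_zero_r)
    ultimately show ?thesis using Suc.IH[of F c k] Suc(2) by blast
  qed
qed

end



locale tri_loc =
  fixes sA :: "'k::field \<Rightarrow> 'a::ring_1 \<Rightarrow> 'a" and sB :: "'k \<Rightarrow> 'b::ring_1 \<Rightarrow> 'b"
    and sM :: "'k \<Rightarrow> 'm::ab_group_add \<Rightarrow> 'm"
    and lA :: "'a \<Rightarrow> 'm \<Rightarrow> 'm" and rB :: "'m \<Rightarrow> 'b \<Rightarrow> 'm"
  assumes A: "unital_algebra_over sA" and B: "unital_algebra_over sB"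
    and M: "bimodule sA sM sB lA rB"
begin

sublocale vA: vsp sA using A unfolding unital_algebra_over_def vector_space_over_def vsp_def by blast
sublocale vB: vsp sB using B unfolding unital_algebra_over_def vector_space_over_def vsp_def by blast
sublocale vM: vsp sM using M unfolding bimodule_def vsp_def by blast

lemma sA_ml: "sA c (x * y) = sA c x * y" using A unfolding unital_algebra_over_def by blast
lemma sA_mr: "sA c (x * y) = x * sA c y" using A unfolding unital_algebra_over_def by blast
lemma sB_ml: "sB c (x * y) = sB c x * y" using B unfolding unital_algebra_over_def by blast
lemma sB_mr: "sB c (x * y) = x * sB c y" using B unfolding unital_algebra_over_def by blast

lemma lA_add_r: "lA a (m + m') = lA a m + lA a m'" using M unfolding bimodule_def by simp
lemma lA_add_l: "lA (a + a') m = lA a m + lA a' m" using M unfolding bimodule_def by simp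
lemma lA_mult: "lA (a * a') m = lA a (lA a' m)" using M unfolding bimodule_def by simp
lemma lA_one: "lA 1 m = m" using M unfolding bimodule_def by simp
lemma rB_add_l: "rB (m + m') b = rB m b + rB m' b" using M unfolding bimodule_def by simp
lemma rB_add_r: "rB m (b + b') = rB m b + rB m b'" using M unfolding bimodule_def by simp
lemma rB_mult: "rB m (b * b') = rB (rB m b) b'" using M unfolding bimodule_def by simp
lemma rB_one: "rB m 1 = m" using M unfolding bimodule_def by simp
lemma lr_comm: "rB (lA a m) b = lA a (rB m b)" using M unfolding bimodule_def by simp
lemma lA_sA: "lA (sA c a) m = sM c (lA a m)" using M unfolding bimodule_def by simp
lemma lA_sM: "lA a (sM c m) = sM c (lA a m)" using M unfolding bimodule_def by simp
lemma rB_sM: "rB (sM c m) b = sM c (rB m b)" using M unfolding bimodule_def by simp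
lemma rB_sB: "rB m (sB c b) = sM c (rB m b)" using M unfolding bimodule_def by simp

lemma lA_zero: "lA a 0 = 0"
proof - have "lA a 0 = lA a 0 + lA a 0" using lA_add_r[of a 0 0] by simp thus ?thesis by simp qed
lemma rB_zero: "rB 0 b = 0"
proof - have "rB 0 b = rB 0 b + rB 0 b" using rB_add_l[of 0 0 b] by simp thus ?thesis by simp qed

abbreviation mul where "mul \<equiv> tri_mul lA rB"
abbreviation sm where "sm \<equiv> tri_smult sA sM sB"
abbreviation pw where "pw \<equiv> tri_pow lA rB"

lemma tri_add_eq: "tri_add X Y = X + Y"
  by (cases X rule: prod_cases3; cases Y rule: prod_cases3) (simp add: tri_add_def)

lemma mul_simp: "mul (a, m, b) (a', m', b') = (a * a', lA a m' + rB m b', b * b')"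
  by (simp add: tri_mul_def)
lemma sm_simp: "sm c (a, m, b) = (sA c a, sM c m, sB c b)"
  by (simp add: tri_smult_def)

sublocale vT: vsp sm
  unfolding vsp_def vector_space_over_def
proof (intro conjI allI)
  fix c d :: 'k and X Y :: "('a,'m,'b) tri"
  show "sm c (X + Y) = sm c X + sm c Y"
    by (cases X rule: prod_cases3; cases Y rule: prod_cases3)
      (simp add: sm_simp vA.s_add_r vB.s_add_r vM.s_add_r)
  show "sm (c + d) X = sm c X + sm d X"
    by (cases X rule: prod_cases3) (simp add: sm_simp vA.s_add_l vB.s_add_l vM.s_add_l)
  show "sm (c * d) X = sm c (sm d X)"
    by (cases X rule: prod_cases3) (simp add: sm_simp vA.s_mult vB.s_mult vM.s_mult)
  show "sm 1 X = X"
    by (cases X rule: prod_cases3) (simp add: sm_simp vA.s_one vB.s_one vM.s_one)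
qed

lemma mul_add_l: "mul (X + Y) Z = mul X Z + mul Y Z"
  by (cases X rule: prod_cases3; cases Y rule: prod_cases3; cases Z rule: prod_cases3)
    (simp add: mul_simp distrib_right lA_add_l rB_add_l algebra_simps)

lemma mul_add_r: "mul X (Y + Z) = mul X Y + mul X Z"
  by (cases X rule: prod_cases3; cases Y rule: prod_cases3; cases Z rule: prod_cases3)
    (simp add: mul_simp distrib_left lA_add_r rB_add_r algebra_simps)

lemma mul_assoc: "mul (mul X Y) Z = mul X (mul Y Z)"
  by (cases X rule: prod_cases3; cases Y rule: prod_cases3; cases Z rule: prod_cases3)
    (simp add: mul_simp mult.assoc lA_add_r rB_add_l lA_mult rB_mult lr_comm algebra_simps)

lemma mul_one_l: "mul tri_one X = X"
  by (cases X rule: prod_cases3) (simp add: mul_simp tri_one_def lA_one rB_zero)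

lemma mul_one_r: "mul X tri_one = X"
  by (cases X rule: prod_cases3) (simp add: mul_simp tri_one_def rB_one lA_zero)

lemma mul_sm_l: "mul (sm c X) Y = sm c (mul X Y)"
  by (cases X rule: prod_cases3; cases Y rule: prod_cases3)
    (simp add: mul_simp sm_simp sA_ml sB_ml lA_sA rB_sM vM.s_add_r)

lemma mul_sm_r: "mul X (sm c Y) = sm c (mul X Y)"
  by (cases X rule: prod_cases3; cases Y rule: prod_cases3)
    (simp add: mul_simp sm_simp sA_mr sB_mr lA_sM rB_sB vM.s_add_r)

lemma mul_zero_l: "mul 0 Y = 0"
proof - have "mul 0 Y = mul 0 Y + mul 0 Y" using mul_add_l[of 0 0 Y] by simp thus ?thesis by simp qed
lemma mul_zero_r: "mul Y 0 = 0"
proof - have "mul Y 0 = mul Y 0 + mul Y 0" using mul_add_r[of Y 0 0] by simp thus ?thesis by simp qed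

lemma mul_sum_l: "mul (sum f S) Y = (\<Sum>i\<in>S. mul (f i) Y)"
  by (induct S rule: infinite_finite_induct) (simp_all add: mul_zero_l mul_add_l)
lemma mul_sum_r: "mul Y (sum f S) = (\<Sum>i\<in>S. mul Y (f i))"
  by (induct S rule: infinite_finite_induct) (simp_all add: mul_zero_r mul_add_r)

lemma pw_one: "pw X 1 = X" by (simp add: mul_one_r)

lemma binom:
  "pw (X + sm t tri_one) n = (\<Sum>k\<le>n. sm (of_nat (n choose k) * t ^ (n - k)) (pw X k))"
proof (induction n)
  case 0
  then show ?case by (simp add: vT.s_one)
next
  case (Suc n)
  have "pw (X + sm t tri_one) (Suc n) = mul (X + sm t tri_one) (pw (X + sm t tri_one) n)" by simp
  also have "\<dots> = (\<Sum>k\<le>n. sm (of_nat (n choose k) * t ^ (n - k)) (pw X (Suc k)))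
     + (\<Sum>k\<le>n. sm (of_nat (n choose k) * t ^ (n - k) * t) (pw X k))"
    by (simp add: Suc.IH mul_add_l mul_sum_r mul_sm_r mul_sm_l mul_one_l vT.s_mult[symmetric] mult.commute vT.s_add_r sum.distrib)
  also have "(\<Sum>k\<le>n. sm (of_nat (n choose k) * t ^ (n - k)) (pw X (Suc k)))
     = (\<Sum>k\<le>Suc n. sm (if k = 0 then 0 else of_nat (n choose (k - 1)) * t ^ (Suc n - k)) (pw X k))"
    by (simp only: sum.atMost_Suc_shift) (simp add: vT.s_zero_l Suc_diff_le)
  also have "(\<Sum>k\<le>n. sm (of_nat (n choose k) * t ^ (n - k) * t) (pw X k))
     = (\<Sum>k\<le>Suc n. sm (if k = Suc n then 0 else of_nat (n choose k) * t ^ (Suc n - k)) (pw X k))"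
    by (simp add: vT.s_zero_l Suc_diff_le power_Suc2[symmetric] mult.assoc)
  also have "(\<Sum>k\<le>Suc n. sm (if k = 0 then 0 else of_nat (n choose (k - 1)) * t ^ (Suc n - k)) (pw X k))
     + (\<Sum>k\<le>Suc n. sm (if k = Suc n then 0 else of_nat (n choose k) * t ^ (Suc n - k)) (pw X k))
     = (\<Sum>k\<le>Suc n. sm (of_nat (Suc n choose k) * t ^ (Suc n - k)) (pw X k))"
    unfolding sum.distrib[symmetric]
  proof (rule sum.cong[OF refl])
    fix k assume k: "k \<in> {..Suc n}"
    have "(if k = 0 then 0 else of_nat (n choose (k - 1)) * t ^ (Suc n - k))
        + (if k = Suc n then 0 else of_nat (n choose k) * t ^ (Suc n - k))
        = (of_nat (Suc n choose k) * t ^ (Suc n - k) :: 'k)"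
    proof (cases k)
      case 0 thus ?thesis by simp
    next
      case (Suc j)
      thus ?thesis using k by (cases "j = n") (auto simp: algebra_simps)
    qed
    thus "sm (if k = 0 then 0 else of_nat (n choose (k - 1)) * t ^ (Suc n - k)) (pw X k)
       + sm (if k = Suc n then 0 else of_nat (n choose k) * t ^ (Suc n - k)) (pw X k)
       = sm (of_nat (Suc n choose k) * t ^ (Suc n - k)) (pw X k)"
      by (simp add: vT.s_add_l[symmetric])
  qed
  finally show ?case .
qed

end



context tri_loc
begin

lemma main_identity:
  fixes \<Psi> :: "('a, 'm, 'b) tri \<Rightarrow> ('a, 'm, 'b) tri"
  assumes lin: "tri_linear sA sM sB \<Psi>" and n1: "n > 1"
    and hyp: "\<forall>X. tri_add (\<Psi> (pw X n)) (\<Psi> (pw X n)) =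
             tri_add (mul (pw X (n - 1)) (\<Psi> X)) (mul (\<Psi> X) (pw X (n - 1)))"
    and cen: "\<Psi> tri_one \<in> tri_center lA rB"
    and inf: "infinite (UNIV::'k set)" and nz: "(of_nat (n - 1) :: 'k) \<noteq> 0"
    and two: "(2::'k) \<noteq> 0"
  shows "\<Psi> X = mul (\<Psi> tri_one) X"
proof -
  define z where "z = \<Psi> tri_one"
  have Padd: "\<Psi> (U + V) = \<Psi> U + \<Psi> V" for U V
  proof -
    have "\<forall>X Y. \<Psi> (tri_add X Y) = tri_add (\<Psi> X) (\<Psi> Y)" using lin unfolding tri_linear_def by blast
    thus ?thesis by (metis tri_add_eq)
  qed
  have Psm: "\<Psi> (sm c U) = sm c (\<Psi> U)" for c U
    using lin unfolding tri_linear_def by blast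
  have P0: "\<Psi> 0 = 0"
  proof - have "\<Psi> 0 = \<Psi> 0 + \<Psi> 0" using Padd[of 0 0] by simp thus ?thesis by simp qed
  have Psum: "\<Psi> (sum f S) = (\<Sum>i\<in>S. \<Psi> (f i))" for f and S :: "nat set"
    by (induct S rule: infinite_finite_induct) (simp_all add: P0 Padd)
  have zc: "mul z Y = mul Y z" for Y
  proof -
    obtain a b where zab: "z = (a, 0, b)" "a \<in> ring_center" "b \<in> ring_center" "\<forall>m. lA a m = rB m b"
      using cen unfolding z_def tri_center_def by blast
    show ?thesis using zab
      by (cases Y rule: prod_cases3) (simp add: mul_simp lA_zero rB_zero ring_center_def)
  qed
  define L where "L k = \<Psi> (pw X k) + \<Psi> (pw X k)" for k
  define U where "U j = mul (pw X j) (\<Psi> X) + mul (\<Psi> X) (pw X j)" for j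
  define W where "W j = mul z (pw X j) + mul z (pw X j)" for j
  have termlem: "mul (sm \<alpha> P) (\<Psi> X + sm t z) + mul (\<Psi> X + sm t z) (sm \<alpha> P)
      = sm \<alpha> (mul P (\<Psi> X) + mul (\<Psi> X) P) + sm (\<alpha> * t) (mul z P + mul z P)" for \<alpha> t P
  proof -
    have "mul P z = mul z P" using zc by simp
    thus ?thesis
      by (simp add: mul_add_l mul_add_r mul_sm_l mul_sm_r vT.s_add_r vT.s_mult vT.s_comm add_ac)
  qed
  have eq: "(\<Sum>k\<le>n. sm (of_nat (n choose k) * t ^ (n - k)) (L k))
     = (\<Sum>j\<le>n-1. sm (of_nat (n - 1 choose j) * t ^ (n - 1 - j)) (U j))
     + (\<Sum>j\<le>n-1. sm (of_nat (n - 1 choose j) * t ^ (n - j)) (W j))" for t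
  proof -
    define Y where "Y = X + sm t tri_one"
    have h: "\<Psi> (pw Y n) + \<Psi> (pw Y n) = mul (pw Y (n-1)) (\<Psi> Y) + mul (\<Psi> Y) (pw Y (n-1))"
      using hyp[rule_format, of Y] by (simp only: tri_add_eq)
    have PY: "\<Psi> Y = \<Psi> X + sm t z" unfolding Y_def z_def by (simp add: Padd Psm)
    have lhs: "\<Psi> (pw Y n) + \<Psi> (pw Y n) = (\<Sum>k\<le>n. sm (of_nat (n choose k) * t ^ (n - k)) (L k))"
      unfolding Y_def L_def by (simp add: binom Psum Psm vT.s_add_r sum.distrib)
    have "mul (pw Y (n-1)) (\<Psi> Y) + mul (\<Psi> Y) (pw Y (n-1))
       = (\<Sum>j\<le>n-1. mul (sm (of_nat (n - 1 choose j) * t ^ (n - 1 - j)) (pw X j)) (\<Psi> X + sm t z)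
            + mul (\<Psi> X + sm t z) (sm (of_nat (n - 1 choose j) * t ^ (n - 1 - j)) (pw X j)))"
      unfolding PY unfolding Y_def binom by (simp add: mul_sum_l mul_sum_r sum.distrib)
    also have "\<dots> = (\<Sum>j\<le>n-1. sm (of_nat (n - 1 choose j) * t ^ (n - 1 - j)) (U j)
          + sm (of_nat (n - 1 choose j) * t ^ (n - j)) (W j))"
    proof (rule sum.cong[OF refl])
      fix j assume j: "j \<in> {..n-1}"
      have "t ^ (n - 1 - j) * t = t ^ (n - j)"
      proof -
        have "n - j = Suc (n - 1 - j)" using j n1 by auto
        thus ?thesis by (simp add: mult.commute)
      qed
      thus "mul (sm (of_nat (n - 1 choose j) * t ^ (n - 1 - j)) (pw X j)) (\<Psi> X + sm t z)
            + mul (\<Psi> X + sm t z) (sm (of_nat (n - 1 choose j) * t ^ (n - 1 - j)) (pw X j))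
          = sm (of_nat (n - 1 choose j) * t ^ (n - 1 - j)) (U j)
          + sm (of_nat (n - 1 choose j) * t ^ (n - j)) (W j)"
        unfolding termlem U_def W_def by (simp add: mult.assoc)
    qed
    also have "\<dots> = (\<Sum>j\<le>n-1. sm (of_nat (n - 1 choose j) * t ^ (n - 1 - j)) (U j))
     + (\<Sum>j\<le>n-1. sm (of_nat (n - 1 choose j) * t ^ (n - j)) (W j))"
      by (rule sum.distrib)
    finally show ?thesis using h lhs by simp
  qed
  define cL where "cL i = (\<Sum>k\<in>{k\<in>{..n}. n - k = i}. sm (of_nat (n choose k)) (L k))" for i
  define cU where "cU i = (\<Sum>k\<in>{k\<in>{..n-1}. n - 1 - k = i}. sm (of_nat (n - 1 choose k)) (U k))" for i
  define cW where "cW i = (\<Sum>k\<in>{k\<in>{..n-1}. n - k = i}. sm (of_nat (n - 1 choose k)) (W k))" for i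
  have "\<forall>t. t \<notin> {} \<longrightarrow> (\<Sum>k\<le>n. sm (t ^ k) (cL k - cU k - cW k)) = 0"
  proof (intro allI impI)
    fix t :: 'k
    have gL: "(\<Sum>k\<le>n. sm (of_nat (n choose k) * t ^ (n - k)) (L k)) = (\<Sum>k\<le>n. sm (t ^ k) (cL k))"
      unfolding cL_def by (rule vT.grouping) auto
    have gU: "(\<Sum>j\<le>n-1. sm (of_nat (n - 1 choose j) * t ^ (n - 1 - j)) (U j)) = (\<Sum>k\<le>n. sm (t ^ k) (cU k))"
      unfolding cU_def by (rule vT.grouping) auto
    have gW: "(\<Sum>j\<le>n-1. sm (of_nat (n - 1 choose j) * t ^ (n - j)) (W j)) = (\<Sum>k\<le>n. sm (t ^ k) (cW k))"
      unfolding cW_def by (rule vT.grouping) auto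
    show "(\<Sum>k\<le>n. sm (t ^ k) (cL k - cU k - cW k)) = 0"
      using eq[of t] unfolding gL gU gW by (simp add: vT.s_diff_r sum_subtractf)
  qed
  hence c0: "cL (n-1) - cU (n-1) - cW (n-1) = 0"
    using vT.poly_zero[OF inf, where F="{}" and D=n and c="\<lambda>k. cL k - cU k - cW k" and k="n-1"] by simp
  have s1: "{k\<in>{..n}. n - k = n - 1} = {1}" using n1 by auto
  have s2: "{k\<in>{..n-1}. n - 1 - k = n - 1} = {0}" using n1 by auto
  have s3: "{k\<in>{..n-1}. n - k = n - 1} = {1}" using n1 by auto
  have "cL (n-1) = sm (of_nat n) (\<Psi> X + \<Psi> X)" unfolding cL_def s1 L_def by (simp add: mul_one_r)
  moreover have "cU (n-1) = \<Psi> X + \<Psi> X" unfolding cU_def s2 U_def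
    by (simp add: mul_one_r mul_one_l vT.s_one)
  moreover have "cW (n-1) = sm (of_nat (n-1)) (mul z X + mul z X)" unfolding cW_def s3 W_def
    using n1 by (simp add: mul_one_r)
  moreover have "(of_nat n :: 'k) = 1 + of_nat (n - 1)" using n1
    by (metis Suc_diff_1 add.commute gr_implies_not0 neq0_conv of_nat_Suc)
  ultimately have "sm (of_nat (n - 1)) (\<Psi> X + \<Psi> X) = sm (of_nat (n-1)) (mul z X + mul z X)"
    using c0 by (simp add: vT.s_add_l vT.s_one)
  hence "\<Psi> X + \<Psi> X = mul z X + mul z X" using vT.s_cancel[OF nz] by blast
  hence "sm 2 (\<Psi> X) = sm 2 (mul z X)" by (simp add: vT.s_two)
  hence "\<Psi> X = mul z X" using vT.s_cancel[OF two] by blast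
  thus ?thesis unfolding z_def .
qed

end


lemma (in tri_loc) center_comm: "z \<in> tri_center lA rB \<Longrightarrow> mul z Y = mul Y z"
  unfolding tri_center_def ring_center_def
  by (cases Y rule: prod_cases3) (auto simp add: mul_simp lA_zero rB_zero)

theorem corollary2p5:
  fixes sA :: "'k::field_char_0 \<Rightarrow> 'a::ring_1 \<Rightarrow> 'a"
    and sB :: "'k \<Rightarrow> 'b::ring_1 \<Rightarrow> 'b"
    and sM :: "'k \<Rightarrow> 'm::ab_group_add \<Rightarrow> 'm"
    and lA :: "'a \<Rightarrow> 'm \<Rightarrow> 'm"
    and rB :: "'m \<Rightarrow> 'b \<Rightarrow> 'm"
    and \<Psi> :: "('a, 'm, 'b) tri \<Rightarrow> ('a, 'm, 'b) tri"
    and n :: nat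
  assumes "unital_algebra_over sA"
    and "unital_algebra_over sB"
    and "bimodule sA sM sB lA rB"
    and "faithful_left lA"
    and "faithful_right rB"
    and "n > 1"
    and "tri_linear sA sM sB \<Psi>"
    and "\<forall>X. tri_add (\<Psi> (tri_pow lA rB X n)) (\<Psi> (tri_pow lA rB X n)) =
             tri_add (tri_mul lA rB (tri_pow lA rB X (n - 1)) (\<Psi> X))
                     (tri_mul lA rB (\<Psi> X) (tri_pow lA rB X (n - 1)))"
    and "\<Psi> tri_one \<in> tri_center lA rB"
  shows "two_sided_centralizer lA rB \<Psi>"
proof -
  interpret tri_loc sA sB sM lA rB
    using assms(1-3) by (simp add: tri_loc_def)
  have nz: "(of_nat (n - 1) :: 'k) \<noteq> 0" using assms(6) by simp
  have key: "\<Psi> X = tri_mul lA rB (\<Psi> tri_one) X" for X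
    by (rule main_identity[OF assms(7) assms(6) assms(8) assms(9) infinite_UNIV_char_0 nz]) simp
  have zc: "tri_mul lA rB (\<Psi> tri_one) Y = tri_mul lA rB Y (\<Psi> tri_one)" for Y
    using center_comm[OF assms(9)] by simp
  show ?thesis
    unfolding two_sided_centralizer_def
  proof (intro conjI allI)
    fix X Y
    show "\<Psi> (tri_add X Y) = tri_add (\<Psi> X) (\<Psi> Y)"
      using assms(7) unfolding tri_linear_def by blast
    show "\<Psi> (tri_mul lA rB X Y) = tri_mul lA rB (\<Psi> X) Y"
    proof -
      have "\<Psi> (tri_mul lA rB X Y) = tri_mul lA rB (\<Psi> tri_one) (tri_mul lA rB X Y)" by (rule key)
      also have "\<dots> = tri_mul lA rB (tri_mul lA rB (\<Psi> tri_one) X) Y" by (rule mul_assoc[symmetric])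
      also have "\<dots> = tri_mul lA rB (\<Psi> X) Y" by (subst key[of X]) (rule refl)
      finally show ?thesis .
    qed
    show "\<Psi> (tri_mul lA rB X Y) = tri_mul lA rB X (\<Psi> Y)"
    proof -
      have "\<Psi> (tri_mul lA rB X Y) = tri_mul lA rB (\<Psi> tri_one) (tri_mul lA rB X Y)" by (rule key)
      also have "\<dots> = tri_mul lA rB (tri_mul lA rB (\<Psi> tri_one) X) Y" by (rule mul_assoc[symmetric])
      also have "\<dots> = tri_mul lA rB (tri_mul lA rB X (\<Psi> tri_one)) Y" by (subst zc) (rule refl)
      also have "\<dots> = tri_mul lA rB X (tri_mul lA rB (\<Psi> tri_one) Y)" by (rule mul_assoc)
      also have "\<dots> = tri_mul lA rB X (\<Psi> Y)" by (subst key[of Y]) (rule refl)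
      finally show ?thesis .
    qed
  qed
qed

end
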